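(* Let $G$ be a simple graph with $n$ vertices and $m$ edges, where $n$ is odd and $m \ge n-1 \ge 3$. Then $$\mathrm{HE}(G) \le \begin{cases} \dfrac{2m}{n-1} + \dfrac{\sqrt{2mn(n^2-3n+1)(n^2-n-2m)}}{n(n-1)}, & \text{if } m \le \dfrac{n^2(n-3)^2}{2(n^2-4n+11)},\\[2ex] \dfrac{1}{n}\sqrt{2m(2n-1)(n^2-2m)}, & \text{otherwise.}\end{cases}$$
   Context: All graphs are finite, simple and undirected. For a graph $G$ on $n$ vertices with adjacency matrix $A$, let $\lambda_1 \ge \lambda_2 \ge \cdots \ge \lambda_n$ be the eigenvalues of $A$ and $r := \lfloor n/2 \rfloor$. The Hückel energy of $G$ is $\mathrm{HE}(G) = 2\sum_{i=1}^{r}\lambda_i$ if $n=2r$, and $\mathrm{HE}(G) = 2\sum_{i=1}^{r}\lambda_i + \lambda_{r+1}$ if $n=2r+1$. *)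

theory Defs
  imports Complex_Main "Jordan_Normal_Form.Char_Poly"
begin

text \<open>A simple graph on the vertex set {0..<n} is given by an edge relation E
  that is symmetric and irreflexive (only its restriction to {0..<n} matters).\<close>

definition simple_graph :: "nat \<Rightarrow> (nat \<Rightarrow> nat \<Rightarrow> bool) \<Rightarrow> bool" where
  "simple_graph n E \<longleftrightarrow> (\<forall>i<n. \<forall>j<n. E i j \<longrightarrow> E j i) \<and> (\<forall>i<n. \<not> E i i)"

definition num_edges :: "nat \<Rightarrow> (nat \<Rightarrow> nat \<Rightarrow> bool) \<Rightarrow> nat" where
  "num_edges n E = card {{i, j} | i j. i < n \<and> j < n \<and> E i j}"

definition adj_mat :: "nat \<Rightarrow> (nat \<Rightarrow> nat \<Rightarrow> bool) \<Rightarrow> real mat" where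
  "adj_mat n E = mat n n (\<lambda>(i, j). if E i j then 1 else 0)"

text \<open>The eigenvalues of a square matrix counted with multiplicity, in non-increasing
  order: the unique non-increasing list whose linear factors multiply to the
  characteristic polynomial (it exists for real symmetric matrices).\<close>

definition eigenvalues_desc :: "real mat \<Rightarrow> real list" where
  "eigenvalues_desc A = (THE ls. length ls = dim_row A \<and> sorted_wrt (\<ge>) ls \<and>
       char_poly A = prod_list (map (\<lambda>l. [:- l, 1:]) ls))"

text \<open>Hueckel energy; eigenvalue lambda_i is (eigenvalues_desc A) ! (i - 1).\<close>

definition huckel_energy :: "nat \<Rightarrow> (nat \<Rightarrow> nat \<Rightarrow> bool) \<Rightarrow> real" where
  "huckel_energy n E =
     (let ls = eigenvalues_desc (adj_mat n E); r = n div 2 in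
      if even n then 2 * (\<Sum>i<r. ls ! i) else 2 * (\<Sum>i<r. ls ! i) + ls ! r)"

end

theory Submission
  imports Defs "Jordan_Normal_Form.Schur_Decomposition" "HOL-Analysis.Analysis"
begin


lemma sum_mult_le_sqrt:
  fixes u v :: "nat \<Rightarrow> real"
  assumes "finite I"
  shows "(\<Sum>i\<in>I. u i * v i) \<le> sqrt (\<Sum>i\<in>I. (u i)^2) * sqrt (\<Sum>i\<in>I. (v i)^2)"
proof -
  have "(\<Sum>i\<in>I. u i * v i) \<le> (\<Sum>i\<in>I. \<bar>u i\<bar> * \<bar>v i\<bar>)"
    by (intro sum_mono) (metis abs_ge_self abs_mult)
  also have "\<dots> \<le> L2_set u I * L2_set v I" by (rule L2_set_mult_ineq)
  finally show ?thesis unfolding L2_set_def .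
qed
lemma id1a: "((N^3 - N^2 + 3*N - 1)^2 + 4*N^3*(N^2 - 3*N + 1)) * ((N^4*(N-1) - (N^3 - N^2 + 3*N - 1)*x)^2 - 4*N^2*(x * N * (N^2 - 3*N + 1) * (N^2 - N - x))) = (((N^3 - N^2 + 3*N - 1)^2 + 4*N^3*(N^2 - 3*N + 1))*x - N^4*(N-1)*((N^3 - N^2 + 3*N - 1)+2*(N^2 - 3*N + 1)))^2"
  for N x :: real
  by (simp add: algebra_simps power2_eq_square power3_eq_cube power4_eq_xxxx)
lemma id2a: "N^2*x^2 + x * N * (N^2 - 3*N + 1) * (N^2 - N - x) + x*(N^4*(N-1) - (N^3 - N^2 + 3*N - 1)*x) = (N-1)^2 * (x * (2*N - 1) * (N^2 - x))" for N x :: real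
  by (simp add: algebra_simps power2_eq_square power3_eq_cube power4_eq_xxxx)

lemma c1_le_c2:
  fixes N x :: real
  assumes N: "N \<ge> 5" and x: "0 < x" "x \<le> N * (N - 1)"
  shows "x / (N - 1) + sqrt (x * N * (N^2 - 3*N + 1) * (N^2 - N - x)) / (N * (N - 1))
         \<le> (1 / N) * sqrt (x * (2*N - 1) * (N^2 - x))"
proof -
  define K where "K = N^2 - 3*N + 1"
  define L where "L = N^3 - N^2 + 3*N - 1"
  define P where "P = x * N * K * (N^2 - N - x)"
  define Q where "Q = x * (2*N - 1) * (N^2 - x)"
  define s where "s = sqrt P"
  define q where "q = sqrt Q"
  have NN: "N^2 \<ge> 5*N" using N by (simp add: power2_eq_square mult_right_mono)
  have K0: "K > 0" unfolding K_def using N NN by linarith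
  have P0: "P \<ge> 0" unfolding P_def using K0 x N by (intro mult_nonneg_nonneg) (auto simp: power2_eq_square algebra_simps)
  have Q0: "Q \<ge> 0" unfolding Q_def using x N by (intro mult_nonneg_nonneg) (use NN in \<open>auto simp: power2_eq_square algebra_simps\<close>)
  have s0: "s \<ge> 0" and ss: "s^2 = P" using P0 by (auto simp: s_def)
  have q0: "q \<ge> 0" and qq: "q^2 = Q" using Q0 by (auto simp: q_def)
  define c where "c = L^2 + 4*N^3*K"
  have c0: "c > 0" unfolding c_def using K0 N by (smt (verit) mult_pos_pos zero_le_power2 zero_less_power)
  have id1: "c * ((N^4*(N-1) - L*x)^2 - 4*N^2*P) = (c*x - N^4*(N-1)*(L+2*K))^2"
    unfolding c_def P_def K_def L_def by (rule id1a)
  have "(N^4*(N-1) - L*x)^2 - 4*N^2*P \<ge> 0"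
  proof -
    have "c * ((N^4*(N-1) - L*x)^2 - 4*N^2*P) \<ge> 0" using id1 by simp
    thus ?thesis using c0 by (simp add: zero_le_mult_iff)
  qed
  hence sq: "(2*N * s)^2 \<le> (N^4*(N-1) - L*x)^2" using ss by (simp add: power_mult_distrib)
  have Lle: "L \<le> N^3" unfolding L_def using N NN by linarith
  have N3: "N^3 \<ge> 5*N^2" using N by (simp add: power2_eq_square power3_eq_cube mult_right_mono)
  have L0: "L \<ge> 0" unfolding L_def using N NN N3 by linarith
  have "L * x \<le> N^3 * (N*(N-1))" using Lle x L0 N by (intro mult_mono) auto
  hence R0: "N^4*(N-1) - L*x \<ge> 0" by (simp add: power3_eq_cube power4_eq_xxxx algebra_simps)
  have step1: "2*N * s \<le> N^4*(N-1) - L*x"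
    using sq R0 by (meson abs_le_square_iff abs_of_nonneg power2_le_imp_le)
  have id2: "N^2*x^2 + P + x*(N^4*(N-1) - L*x) = (N-1)^2 * Q"
    unfolding P_def Q_def K_def L_def by (rule id2a)
  have "(N*x + s)^2 = N^2*x^2 + P + x*(2*N * s)" using ss by (simp add: power2_eq_square algebra_simps)
  also have "\<dots> \<le> N^2*x^2 + P + x*(N^4*(N-1) - L*x)" using step1 x by (simp add: mult_left_mono)
  also have "\<dots> = ((N-1)*q)^2" using id2 qq by (simp add: power_mult_distrib)
  finally have "N*x + s \<le> (N-1)*q" 
    by (rule power2_le_imp_le) (use q0 N in simp)
  hence "(N*x + s) / (N*(N-1)) \<le> (N-1)*q / (N*(N-1))" using N by (intro divide_right_mono) auto
  moreover have N0: "N \<noteq> 0" "N - 1 \<noteq> 0" using N by auto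
  moreover have "(N*x + s) / (N*(N-1)) = x/(N-1) + s/(N*(N-1))" using N0 by (simp add: add_divide_distrib)
  moreover have "(N-1)*q / (N*(N-1)) = (1/N) * q" using N0 by simp
  ultimately show ?thesis unfolding s_def q_def P_def Q_def K_def by simp
qed

lemma mono_step:
  fixes a a0 K al m :: real
  assumes al: "al > 0" and K: "K > 0" and a: "a \<ge> a0" "a0 \<ge> 0"
    and V: "2*m - al * a^2 \<ge> 0" and big: "2*m \<le> a0^2 * (K + al)"
  shows "al * a + sqrt (K * (2*m - al * a^2)) \<le> al * a0 + sqrt (K * (2*m - al * a0^2))"
proof -
  define u0 where "u0 = sqrt (K * (2*m - al * a0^2))"
  define w where "w = sqrt (K * (2*m - al * a^2))"
  have aa: "a0^2 \<le> a^2" using a by (simp add: power_mono)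
  have V0: "2*m - al * a0^2 \<ge> 2*m - al * a^2" using aa al by (simp add: mult_left_mono)
  have u0sq: "u0^2 = K * (2*m - al * a0^2)" unfolding u0_def using V V0 K by (simp add: real_sqrt_pow2 mult_nonneg_nonneg)
  have wsq: "w^2 = K * (2*m - al * a^2)" unfolding w_def using V K by (simp add: real_sqrt_pow2 mult_nonneg_nonneg)
  have u00: "u0 \<ge> 0" and w0: "w \<ge> 0" unfolding u0_def w_def using V V0 K
    by (auto intro!: real_sqrt_ge_zero mult_nonneg_nonneg)
  have "2*m - al * a0^2 \<le> K * a0^2" using big by (simp add: algebra_simps)
  hence "K * (2*m - al * a0^2) \<le> K * (K * a0^2)" using K by (intro mult_left_mono) auto
  hence "u0^2 \<le> (K*a0)^2" using u0sq by (simp add: power2_eq_square algebra_simps)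
  hence u0le: "u0 \<le> K * a0" by (rule power2_le_imp_le) (use K a in auto)
  have "2*m \<le> a^2 * (K + al)" 
  proof -
    have "a0^2 * (K + al) \<le> a^2 * (K + al)" using aa K al by (intro mult_right_mono) auto
    thus ?thesis using big by linarith
  qed
  hence "2*m - al * a^2 \<le> K * a^2" by (simp add: algebra_simps)
  hence "K * (2*m - al * a^2) \<le> K * (K * a^2)" using K by (intro mult_left_mono) auto
  hence "w^2 \<le> (K*a)^2" using wsq by (simp add: power2_eq_square algebra_simps)
  hence wle: "w \<le> K * a" by (rule power2_le_imp_le) (use K a in auto)
  have diff: "(u0 - w) * (u0 + w) = K * al * (a - a0) * (a + a0)"
    using u0sq wsq by (simp add: power2_eq_square algebra_simps)
  have "al * (a - a0) \<le> u0 - w"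
  proof (cases "u0 + w > 0")
    case True
    have "al * (a - a0) * (u0 + w) \<le> al * (a - a0) * (K * (a + a0))"
      using u0le wle al a by (intro mult_left_mono) (auto simp: algebra_simps)
    also have "\<dots> = (u0 - w) * (u0 + w)" using diff by (simp add: algebra_simps)
    finally show ?thesis using True by (simp add: mult_le_cancel_right)
  next
    case False
    hence "u0 = 0" "w = 0" using u00 w0 by auto
    hence "K * al * (a - a0) * (a + a0) = 0" using diff by simp
    hence "a = a0" using K al a by auto
    thus ?thesis using \<open>u0 = 0\<close> \<open>w = 0\<close> by simp
  qed
  thus ?thesis unfolding u0_def w_def by (simp add: algebra_simps)
qed

lemma he_list_bound:
  fixes l :: "nat \<Rightarrow> real" and n r :: nat and m :: real
  assumes n: "n = 2*r+1" and r: "r \<ge> 2"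
    and s1: "(\<Sum>i<n. l i) = 0" and s2: "(\<Sum>i<n. (l i)^2) = 2*m"
    and a0: "l 0 \<ge> 2*m/real n" and m: "m \<ge> real n - 1"
  shows "2*(\<Sum>i<r. l i) + l r \<le> 2*m/(real n - 1)
     + sqrt (2*m*real n*((real n)^2 - 3*real n + 1)*((real n)^2 - real n - 2*m)) / (real n * (real n - 1))
     \<and> 2*m \<le> real n * (real n - 1)"
proof -
  define N where "N = real n"
  define R where "R = real r"
  define a where "a = l 0"
  have NR: "N = 2*R+1" unfolding N_def R_def n by simp
  have R2: "R \<ge> 2" unfolding R_def using r by simp
  have split: "(\<Sum>i\<in>{1..<n}. f i) = (\<Sum>i\<in>{1..<r}. f i) + f r + (\<Sum>i\<in>{Suc r..<n}. f i)" for f :: "nat \<Rightarrow> real"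
  proof -
    have "(\<Sum>i\<in>{1..<n}. f i) = (\<Sum>i\<in>{1..<r}. f i) + (\<Sum>i\<in>{r..<n}. f i)"
      using sum.atLeastLessThan_concat[of 1 r n f] r n by simp
    moreover have "(\<Sum>i\<in>{r..<n}. f i) = f r + (\<Sum>i\<in>{Suc r..<n}. f i)"
      using sum.atLeast_Suc_lessThan[of r n f] n by simp
    ultimately show ?thesis by simp
  qed
  have full: "(\<Sum>i<k. f i) = f 0 + (\<Sum>i\<in>{1..<k}. f i)" if "k > 0" for f :: "nat \<Rightarrow> real" and k
    using sum.atLeast_Suc_lessThan[of 0 k f] that by (simp add: lessThan_atLeast0)
  define S1 where "S1 = (\<Sum>i\<in>{1..<r}. l i)"
  define T where "T = (\<Sum>i\<in>{Suc r..<n}. l i)"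
  have tot: "a + S1 + l r + T = 0" using s1 full[of n l] split[of l] n unfolding a_def S1_def T_def by simp
  have HE: "2*(\<Sum>i<r. l i) + l r = 2*(a + S1) + l r" using full[of r l] r unfolding a_def S1_def by simp
  define c where "c = 1/(N-1)"
  define b where "b = a/(N-1)"
  define d where "d i = (if i < r then 1 else if i = r then 0 else -1::real)" for i
  define u where "u i = d i + c" for i
  define v where "v i = l i + b" for i
  have cA1: "card {1..<r} = r - 1" by simp
  have cA1r: "real (card {1..<r}) = R - 1" unfolding R_def using r by simp
  have rR: "real (r - Suc 0) = R - 1" unfolding R_def using r by simp
  have cA2r: "real (card {Suc r..<n}) = R" unfolding R_def using n by simp
  have uv1: "(\<Sum>i\<in>{1..<r}. u i * v i) = (1+c) * (S1 + (R-1)*b)"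
  proof -
    have "(\<Sum>i\<in>{1..<r}. u i * v i) = (\<Sum>i\<in>{1..<r}. (1+c) * (l i + b))"
      by (rule sum.cong) (auto simp: u_def v_def d_def)
    also have "\<dots> = (1+c) * (S1 + (R-1)*b)"
      unfolding S1_def by (simp add: sum_distrib_left[symmetric] sum.distrib rR)
    finally show ?thesis .
  qed
  have uv2: "(\<Sum>i\<in>{Suc r..<n}. u i * v i) = (c-1) * (T + R*b)"
  proof -
    have "(\<Sum>i\<in>{Suc r..<n}. u i * v i) = (\<Sum>i\<in>{Suc r..<n}. (c-1) * (l i + b))"
      by (rule sum.cong) (auto simp: u_def v_def d_def)
    also have "\<dots> = (c-1) * (T + R*b)"
      unfolding T_def using cA2r by (simp add: sum_distrib_left[symmetric] sum.distrib)
    finally show ?thesis .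
  qed
  have uvr: "u r * v r = c * (l r + b)" by (simp add: u_def v_def d_def)
  have suv: "(\<Sum>i\<in>{1..<n}. u i * v i) = (1+c) * (S1 + (R-1)*b) + c * (l r + b) + (c-1) * (T + R*b)"
    using split[of "\<lambda>i. u i * v i"] uv1 uv2 uvr by simp
  have R0: "R \<noteq> 0" using R2 by simp
  have RR: "R*R \<ge> 2*R" using R2 by (simp add: mult_right_mono)
  have HE2: "2*(a + S1) + l r = a * N/(N-1) + (\<Sum>i\<in>{1..<n}. u i * v i)"
  proof -
    have T': "T = - a - S1 - l r" using tot by simp
    show ?thesis unfolding suv T' c_def b_def NR using R0 by (simp add: field_simps)
  qed
  define K where "K = (N^2 - 3*N + 1)/(N-1)"
  have su2: "(\<Sum>i\<in>{1..<n}. (u i)^2) = K"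
  proof -
    have 1: "(\<Sum>i\<in>{1..<r}. (u i)^2) = (R-1)*(1+c)^2"
      using cA1r by (subst sum.cong[of _ _ _ "\<lambda>_. (1+c)^2"]) (auto simp: u_def d_def)
    have 2: "(\<Sum>i\<in>{Suc r..<n}. (u i)^2) = R*(c-1)^2"
      using cA2r by (subst sum.cong[of _ _ _ "\<lambda>_. (c-1)^2"]) (auto simp: u_def d_def)
    have 3: "(u r)^2 = c^2" by (simp add: u_def d_def)
    have "(\<Sum>i\<in>{1..<n}. (u i)^2) = (R-1)*(1+c)^2 + c^2 + R*(c-1)^2"
      using split[of "\<lambda>i. (u i)^2"] 1 2 3 by simp
    also have "\<dots> = K" unfolding K_def c_def NR using R0
      by (simp add: field_simps power2_eq_square; simp add: algebra_simps)
    finally show ?thesis .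
  qed
  define al where "al = N/(N-1)"
  have sv2: "(\<Sum>i\<in>{1..<n}. (v i)^2) = 2*m - al * a^2"
  proof -
    have "(\<Sum>i\<in>{1..<n}. (v i)^2) = (\<Sum>i\<in>{1..<n}. (l i)^2) + 2*b*(\<Sum>i\<in>{1..<n}. l i) + (N-1)*b^2"
      unfolding v_def power2_eq_square by (simp add: algebra_simps sum.distrib sum_distrib_left N_def n)
    also have "(\<Sum>i\<in>{1..<n}. (l i)^2) = 2*m - a^2" using s2 full[of n "\<lambda>i. (l i)^2"] n unfolding a_def by simp
    also have "(\<Sum>i\<in>{1..<n}. l i) = - a" using s1 full[of n l] n unfolding a_def by simp
    finally show ?thesis unfolding al_def b_def NR using R0 by (simp add: field_simps power2_eq_square; simp add: algebra_simps)
  qed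
  have V0: "2*m - al * a^2 \<ge> 0" using sv2[symmetric] by (simp add: sum_nonneg)
  have CS: "(\<Sum>i\<in>{1..<n}. u i * v i) \<le> sqrt (K * (2*m - al * a^2))"
    using sum_mult_le_sqrt[of "{1..<n}" u v] su2 sv2 by (simp add: real_sqrt_mult)
  have Kpos: "K > 0"
  proof -
    have e: "N^2 - 3*N + 1 = 4*(R*R) - 2*R - 1" unfolding NR by (simp add: power2_eq_square algebra_simps)
    have "N^2 - 3*N + 1 > 0" unfolding e using RR R2 by linarith
    moreover have "N - 1 > 0" unfolding NR using R2 by simp
    ultimately show ?thesis unfolding K_def by simp
  qed
  have alpos: "al > 0" unfolding al_def NR using R2 by simp
  define a0 where "a0 = 2*m/N"
  have mpos: "m > 0" using m NR R2 unfolding N_def by simp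
  have a00: "a0 \<ge> 0" unfolding a0_def NR using mpos R2 by simp
  have aa0: "a \<ge> a0" using a0 unfolding a_def a0_def N_def .
  have Kal: "K + al = N - 1" unfolding K_def al_def NR using R0 by (simp add: field_simps power2_eq_square; simp add: algebra_simps)
  have big: "2*m \<le> a0^2 * (K + al)"
  proof -
    have "N^2 \<le> 2*m*(N-1)"
    proof -
      have e: "N^2 = 4*(R*R) + 4*R + 1" "2*(N-1)*(N-1) = 8*(R*R)" unfolding NR by (simp_all add: power2_eq_square algebra_simps)
      have "N^2 \<le> 2*(N-1)*(N-1)" unfolding e using RR R2 by linarith
      also have "\<dots> \<le> 2*m*(N-1)" using m NR R2 unfolding N_def by (intro mult_right_mono) auto
      finally show ?thesis .
    qed
    hence "2*m * N^2 \<le> 2*m * (2*m*(N-1))" using mpos by (intro mult_left_mono) auto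
    moreover have "a0^2*(N-1) = (2*m*(2*m*(N-1)))/N^2" unfolding a0_def by (simp add: power2_eq_square)
    moreover have "N^2 > 0" unfolding NR using R2 by simp
    ultimately show ?thesis unfolding Kal by (simp add: pos_le_divide_eq)
  qed
  have ms: "al * a + sqrt (K * (2*m - al * a^2)) \<le> al * a0 + sqrt (K * (2*m - al * a0^2))"
    by (rule mono_step[OF alpos Kpos aa0 a00 V0 big])
  have Nn0: "N \<noteq> 0" "N - 1 \<noteq> 0" using NR R2 by auto
  have e1: "al * a0 = 2*m/(N-1)" unfolding al_def a0_def using Nn0 by (simp add: field_simps)
  have e2: "K * (2*m - al * a0^2) = (2*m*N*(N^2 - 3*N + 1)*(N^2 - N - 2*m)) / (N*(N-1))^2"
    unfolding K_def al_def a0_def using Nn0 by (simp add: field_simps power2_eq_square; algebra)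
  have NN1: "N*(N-1) > 0" unfolding NR using R2 by simp
  have e3: "sqrt (K * (2*m - al * a0^2)) = sqrt (2*m*N*(N^2 - 3*N + 1)*(N^2 - N - 2*m)) / (N*(N-1))"
    unfolding e2 real_sqrt_divide using NN1 by simp
  have "2*(\<Sum>i<r. l i) + l r \<le> al * a + sqrt (K * (2*m - al * a^2))"
    using HE HE2 CS unfolding al_def by (simp add: mult.commute)
  also note ms
  finally have res: "2*(\<Sum>i<r. l i) + l r \<le> 2*m/(N-1) + sqrt (2*m*N*(N^2 - 3*N + 1)*(N^2 - N - 2*m)) / (N*(N-1))"
    unfolding e1 e3 .
  have "al * a0^2 \<le> al * a^2" using alpos aa0 a00 by (intro mult_left_mono power_mono) auto
  hence "al * a0^2 \<le> 2*m" using V0 by linarith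
  moreover have "al * a0^2 = 2*m * (2*m / (N*(N-1)))" unfolding al_def a0_def using Nn0 by (simp add: field_simps power2_eq_square)
  ultimately have "2*m * (2*m / (N*(N-1))) \<le> 2*m * 1" by simp
  hence "2*m / (N*(N-1)) \<le> 1" by (rule mult_left_le_imp_le) (use mpos in simp)
  hence "2*m \<le> N*(N-1)" using NN1 by (simp add: divide_le_eq)
  thus ?thesis using res unfolding N_def by simp
qed



lemma real_sym_char_poly_splits:
  fixes A :: "real mat"
  assumes A: "A \<in> carrier_mat n n" and sym: "\<And>i j. i < n \<Longrightarrow> j < n \<Longrightarrow> A $$ (i,j) = A $$ (j,i)"
  shows "\<exists>ls. length ls = n \<and> char_poly A = (\<Prod>l\<leftarrow>ls. [:-l, 1:])"
proof -
  interpret m: map_poly_inj_comm_ring_hom "of_real :: real \<Rightarrow> complex" ..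
  define A' where "A' = map_mat (of_real :: real \<Rightarrow> complex) A"
  have A': "A' \<in> carrier_mat n n" unfolding A'_def using A by simp
  obtain as where cp: "char_poly A' = (\<Prod>a\<leftarrow>as. [:- a, 1:])" and len: "length as = n"
    using char_poly_factorized[OF A'] by blast
  have isreal: "Im a = 0" if a: "a \<in> set as" for a
  proof -
    have "poly (char_poly A') a = 0" unfolding cp using a by (rule linear_poly_root)
    hence "eigenvalue A' a" using eigenvalue_root_char_poly[OF A'] by simp
    then obtain v where v: "v \<in> carrier_vec n" "v \<noteq> 0\<^sub>v n" "A' *\<^sub>v v = a \<cdot>\<^sub>v v"
      unfolding eigenvalue_def eigenvector_def using A' by auto
    have comp: "(\<Sum>j<n. complex_of_real (A $$ (i,j)) * v $ j) = a * v $ i" if i: "i < n" for i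
    proof -
      have "(A' *\<^sub>v v) $ i = a * v $ i" using v(3) v(1) i by simp
      moreover have "(A' *\<^sub>v v) $ i = (\<Sum>j<n. complex_of_real (A $$ (i,j)) * v $ j)"
        using A A' v(1) i unfolding A'_def by (simp add: scalar_prod_def lessThan_atLeast0)
      ultimately show ?thesis by simp
    qed
    define X where "X = (\<Sum>i<n. \<Sum>j<n. cnj (v $ i) * complex_of_real (A $$ (i,j)) * v $ j)"
    define S where "S = (\<Sum>i<n. cnj (v $ i) * v $ i)"
    have XS: "X = a * S"
    proof -
      have "X = (\<Sum>i<n. cnj (v $ i) * (\<Sum>j<n. complex_of_real (A $$ (i,j)) * v $ j))"
        unfolding X_def by (simp add: sum_distrib_left mult.assoc)
      also have "\<dots> = (\<Sum>i<n. cnj (v $ i) * (a * v $ i))" using comp by simp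
      finally show ?thesis unfolding S_def by (simp add: sum_distrib_left algebra_simps)
    qed
    have "cnj X = (\<Sum>i<n. \<Sum>j<n. v $ i * complex_of_real (A $$ (i,j)) * cnj (v $ j))"
      unfolding X_def by (simp add: cnj_sum)
    also have "\<dots> = (\<Sum>j<n. \<Sum>i<n. v $ i * complex_of_real (A $$ (i,j)) * cnj (v $ j))"
      by (rule sum.swap)
    also have "\<dots> = X" unfolding X_def
      by (intro sum.cong refl) (simp add: sym mult.commute mult.left_commute)
    finally have cX: "cnj X = X" .
    have Sr: "S = complex_of_real (\<Sum>i<n. (cmod (v $ i))^2)"
    proof -
      have "cnj (v $ i) * v $ i = complex_of_real ((cmod (v $ i))^2)" for i
        by (subst complex_norm_square) (simp add: mult.commute)
      thus ?thesis unfolding S_def of_real_sum by simp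
    qed
    have "\<exists>i<n. v $ i \<noteq> 0"
    proof (rule ccontr)
      assume "\<not> (\<exists>i<n. v $ i \<noteq> 0)"
      hence "v = 0\<^sub>v n" using v(1) by (intro eq_vecI) auto
      thus False using v(2) by simp
    qed
    then obtain i where i: "i < n" "v $ i \<noteq> 0" by blast
    have "(\<Sum>i<n. (cmod (v $ i))^2) \<ge> (cmod (v $ i))^2"
      using i by (intro member_le_sum) auto
    moreover have "(cmod (v $ i))^2 > 0" using i by simp
    ultimately have Spos: "(\<Sum>i<n. (cmod (v $ i))^2) > 0" by linarith
    have "Im (cnj X) = Im X" using cX by simp
    hence "Im X = 0" by simp
    hence "Im a * (\<Sum>i<n. (cmod (v $ i))^2) = 0" unfolding XS Sr by simp
    thus ?thesis using Spos by simp
  qed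
  define ls where "ls = map Re as"
  have "map (\<lambda>a. [:- a, 1:]) as = map (\<lambda>l. map_poly of_real [:-l, 1:]) ls"
    unfolding ls_def using isreal by (auto simp: complex_eq_iff)
  hence "char_poly A' = map_poly of_real (\<Prod>l\<leftarrow>ls. [:-l, 1:])"
    unfolding cp by (simp add: m.hom_prod_list o_def)
  moreover have "char_poly A' = map_poly of_real (char_poly A)"
    unfolding A'_def using of_real_hom.char_poly_hom[OF A] by simp
  ultimately have "char_poly A = (\<Prod>l\<leftarrow>ls. [:-l, 1:])" by (metis m.injectivity)
  moreover have "length ls = n" using len unfolding ls_def by simp
  ultimately show ?thesis by blast
qed

lemma sorted_roots_unique:
  fixes xs ys :: "real list"
  assumes "sorted_wrt (\<ge>) xs" "sorted_wrt (\<ge>) ys" "(\<Prod>l\<leftarrow>xs. [:-l,1:]) = (\<Prod>l\<leftarrow>ys. [:-l,1:])"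
  shows "xs = ys"
  using assms
proof (induction xs arbitrary: ys)
  case Nil
  show ?case
  proof (cases ys)
    case (Cons y ys')
    have "poly (\<Prod>l\<leftarrow>ys. [:-l,1:]) y = 0" using Cons by (intro linear_poly_root) simp
    with Nil(3) show ?thesis by simp
  qed simp
next
  case (Cons x xs)
  obtain y ys' where ys: "ys = y # ys'"
  proof (cases ys)
    case Nil
    have "poly (\<Prod>l\<leftarrow>x#xs. [:-l,1:]) x = 0" by (intro linear_poly_root) simp
    with Cons(4) Nil show ?thesis by simp
  qed
  have "poly (\<Prod>l\<leftarrow>ys. [:-l,1:]) x = 0" unfolding Cons(4)[symmetric] by (intro linear_poly_root) simp
  hence "x \<in> set ys" by (auto simp: poly_prod_list_zero_iff)
  hence xy: "x \<le> y" using Cons(3) ys by auto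
  have "poly (\<Prod>l\<leftarrow>x#xs. [:-l,1:]) y = 0" unfolding Cons(4) ys by (intro linear_poly_root) simp
  hence "y \<in> set (x#xs)" by (auto simp: poly_prod_list_zero_iff)
  hence "y \<le> x" using Cons(2) by auto
  with xy have xy: "x = y" by simp
  have ne: "[:-x,1:] \<noteq> (0 :: real poly)" by simp
  have "(\<Prod>l\<leftarrow>xs. [:-l,1:]) = (\<Prod>l\<leftarrow>ys'. [:-l,1:])"
  proof -
    have "[:-x,1:] * (\<Prod>l\<leftarrow>xs. [:-l,1:]) = [:-x,1:] * (\<Prod>l\<leftarrow>ys'. [:-l,1:])"
      using Cons(4) unfolding ys xy by (metis list.simps(9) prod_list.Cons)
    thus ?thesis using mult_left_cancel[OF ne] by blast
  qed
  moreover have "sorted_wrt (\<ge>) xs" "sorted_wrt (\<ge>) ys'" using Cons(2,3) ys by auto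
  ultimately have "xs = ys'" using Cons.IH by blast
  thus ?case using xy ys by simp
qed

lemma eigenvalues_desc_props:
  fixes A :: "real mat"
  assumes A: "A \<in> carrier_mat n n" and sym: "\<And>i j. i < n \<Longrightarrow> j < n \<Longrightarrow> A $$ (i,j) = A $$ (j,i)"
  shows "length (eigenvalues_desc A) = n \<and> sorted_wrt (\<ge>) (eigenvalues_desc A) \<and>
     char_poly A = (\<Prod>l\<leftarrow>eigenvalues_desc A. [:-l, 1:])"
proof -
  obtain ls0 where l0: "length ls0 = n" "char_poly A = (\<Prod>l\<leftarrow>ls0. [:-l, 1:])"
    using real_sym_char_poly_splits[OF A sym] by blast
  define ls where "ls = rev (sort ls0)"
  have "length ls = n" unfolding ls_def using l0 by simp
  moreover have "sorted_wrt (\<ge>) ls" unfolding ls_def sorted_wrt_rev using sorted_sort[of ls0] by (simp add: sorted_wrt_iff_nth_less)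
  moreover have "(\<Prod>l\<leftarrow>ls. [:-l, 1:]) = (\<Prod>l\<leftarrow>ls0. [:-l, 1:])"
  proof -
    have "mset (map (\<lambda>l. [:-l, 1:]) ls) = mset (map (\<lambda>l. [:-l, 1:]) ls0)" unfolding ls_def by simp
    thus ?thesis by (metis prod_mset_prod_list)
  qed
  ultimately have ex: "length ls = dim_row A \<and> sorted_wrt (\<ge>) ls \<and> char_poly A = (\<Prod>l\<leftarrow>ls. [:-l, 1:])"
    using l0 A by simp
  have "\<exists>!ls. length ls = dim_row A \<and> sorted_wrt (\<ge>) ls \<and> char_poly A = (\<Prod>l\<leftarrow>ls. [:-l, 1:])"
    using ex sorted_roots_unique by (intro ex1I[of _ ls]) auto
  from theI'[OF this] show ?thesis unfolding eigenvalues_desc_def using A by simp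
qed



lemma quad_zero:
  fixes b c :: real
  assumes "\<And>t. 0 \<le> 2*t*b + t^2*c"
  shows "b = 0"
proof (rule ccontr)
  assume b: "b \<noteq> 0"
  define t where "t = - b / (\<bar>c\<bar> + 1)"
  have d: "\<bar>c\<bar> + 1 > 0" by simp
  have gen: "2*(-b/e)*b + (-b/e)^2*c = (b^2/e^2)*(c - 2*e)" if "e \<noteq> 0" for e :: real
    using that by (simp add: field_simps power2_eq_square)
  have "2*t*b + t^2*c = (b^2 / (\<bar>c\<bar> + 1)^2) * (c - 2*(\<bar>c\<bar> + 1))"
    unfolding t_def using gen[of "\<bar>c\<bar> + 1"] d by simp
  moreover have "c - 2*(\<bar>c\<bar> + 1) < 0" by (cases "c \<ge> 0") auto
  moreover have "b^2 / (\<bar>c\<bar> + 1)^2 > 0" using b by simp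
  ultimately have "2*t*b + t^2*c < 0" by (metis mult_pos_neg)
  with assms[of t] show False by simp
qed

lemma rayleigh_eigenvalue:
  fixes A :: "real mat"
  assumes A: "A \<in> carrier_mat n n" and sym: "\<And>i j. i < n \<Longrightarrow> j < n \<Longrightarrow> A $$ (i,j) = A $$ (j,i)"
    and n: "n > 0"
  shows "\<exists>M. eigenvalue A M \<and> (\<Sum>i<n. \<Sum>j<n. A $$ (i,j)) \<le> M * real n"
proof -
  define q where "q x = (\<Sum>i<n. \<Sum>j<n. A $$ (i,j) * x i * x j)" for x :: "nat \<Rightarrow> real"
  define sq where "sq x = (\<Sum>i<n. (x i)^2)" for x :: "nat \<Rightarrow> real"
  define X where "X = product_topology (\<lambda>_. euclideanreal) {..<n}"
  define C where "C = PiE {..<n} (\<lambda>_. {-1..1::real})"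
  define D where "D = {x \<in> topspace X. sq x \<in> {1}} \<inter> C"
  have contq: "continuous_map X euclideanreal q"
    unfolding q_def X_def by (auto intro!: continuous_intros)
  have contsq: "continuous_map X euclideanreal sq"
    unfolding sq_def X_def by (auto intro!: continuous_intros)
  have compC: "compactin X C" unfolding X_def C_def by (simp add: compactin_PiE)
  have closD: "closedin X {x \<in> topspace X. sq x \<in> {1}}"
    by (rule closedin_continuous_map_preimage[OF contsq]) simp
  have compD: "compactin X D" unfolding D_def by (rule closed_Int_compactin[OF closD compC])
  have "compactin euclideanreal (q ` D)" by (rule image_compactin[OF compD contq])
  hence cq: "compact (q ` D)" by simp
  define e0 where "e0 = restrict (\<lambda>i. if i = 0 then 1 else 0::real) {..<n}"
  have "sq e0 = (\<Sum>i<n. if i = 0 then 1 else 0)" unfolding sq_def e0_def by (intro sum.cong) auto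
  also have "\<dots> = 1" using n by simp
  finally have "e0 \<in> D" unfolding D_def C_def X_def e0_def using n by (auto simp: PiE_iff)
  hence "q ` D \<noteq> {}" by auto
  then obtain M where M: "M \<in> q ` D" and Mmax: "\<And>y. y \<in> q ` D \<Longrightarrow> y \<le> M"
    using compact_attains_sup[OF cq] by blast
  then obtain x0 where x0: "x0 \<in> D" "q x0 = M" by auto
  have sqx0: "sq x0 = 1" using x0 unfolding D_def by auto
  have psd: "q z \<le> M * sq z" for z
  proof (cases "sq z = 0")
    case True
    have "\<forall>i\<in>{..<n}. (z i)^2 = 0" using True unfolding sq_def by (subst sum_nonneg_eq_0_iff[symmetric]) auto
    hence "q z = 0" unfolding q_def by simp
    thus ?thesis using True by simp
  next
    case False
    have s0: "sq z > 0" using False unfolding sq_def by (metis sum_nonneg zero_le_power2 order_le_less)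
    define s where "s = sqrt (sq z)"
    have s: "s > 0" "s^2 = sq z" unfolding s_def using s0 by auto
    define y where "y = restrict (\<lambda>i. z i / s) {..<n}"
    have sqy: "sq y = 1" unfolding sq_def y_def using s s0[unfolded sq_def]
      by (simp add: power_divide sum_divide_distrib[symmetric]) (simp add: sq_def)
    have yb: "\<bar>y i\<bar> \<le> 1" if "i < n" for i
    proof -
      have "(y i)^2 \<le> sq y" unfolding sq_def using that by (intro member_le_sum) auto
      hence "(y i)^2 \<le> 1^2" using sqy by simp
      thus ?thesis using power2_le_iff_abs_le[of 1 "y i"] by simp
    qed
    have yb2: "-1 \<le> z i / s \<and> z i / s \<le> 1" if "i < n" for i
    proof -
      have "y i = z i / s" using that unfolding y_def by simp
      hence "\<bar>z i / s\<bar> \<le> 1" using yb[OF that] by simp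
      thus ?thesis by linarith
    qed
    have "y \<in> D" unfolding D_def C_def X_def using sqy yb2 by (auto simp: PiE_iff y_def)
    hence qy: "q y \<le> M" using Mmax by auto
    have "q y = q z / s^2" unfolding q_def y_def
      by (simp add: sum_divide_distrib power2_eq_square)
    hence "q z = sq z * q y" using s s0 by simp
    also have "\<dots> \<le> sq z * M" using qy s0 by (simp add: mult_left_mono)
    finally show ?thesis by (simp add: mult.commute)
  qed
  define w where "w z = M * sq z - q z" for z
  have w0: "w z \<ge> 0" for z using psd[of z] unfolding w_def by simp
  have wx0: "w x0 = 0" unfolding w_def using sqx0 x0 by simp
  define Bf where "Bf y = M * (\<Sum>i<n. x0 i * y i) - (\<Sum>i<n. \<Sum>j<n. A $$ (i,j) * x0 i * y j)" for y
  have swap: "(\<Sum>i<n. \<Sum>j<n. A $$ (i,j) * y i * x0 j) = (\<Sum>i<n. \<Sum>j<n. A $$ (i,j) * x0 i * y j)" for y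
  proof -
    have "(\<Sum>i<n. \<Sum>j<n. A $$ (i,j) * y i * x0 j) = (\<Sum>j<n. \<Sum>i<n. A $$ (i,j) * y i * x0 j)"
      by (rule sum.swap)
    also have "\<dots> = (\<Sum>i<n. \<Sum>j<n. A $$ (i,j) * x0 i * y j)"
      by (intro sum.cong refl) (simp add: sym mult.commute mult.left_commute)
    finally show ?thesis .
  qed
  have expand: "w (\<lambda>i. x0 i + t * y i) = w x0 + 2*t*Bf y + t^2 * w y" for t y
  proof -
    have "q (\<lambda>i. x0 i + t * y i) = q x0 + t * (\<Sum>i<n. \<Sum>j<n. A $$ (i,j) * x0 i * y j)
        + t * (\<Sum>i<n. \<Sum>j<n. A $$ (i,j) * y i * x0 j) + t^2 * q y"
      unfolding q_def by (simp add: algebra_simps sum.distrib sum_distrib_left power2_eq_square)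
    moreover have "sq (\<lambda>i. x0 i + t * y i) = sq x0 + 2 * t * (\<Sum>i<n. x0 i * y i) + t^2 * sq y"
      unfolding sq_def by (simp add: algebra_simps sum.distrib sum_distrib_left power2_eq_square)
    ultimately show ?thesis unfolding w_def Bf_def swap by (simp add: algebra_simps)
  qed
  have B0: "Bf y = 0" for y
  proof (rule quad_zero)
    fix t :: real
    show "0 \<le> 2*t*Bf y + t^2 * w y" using w0[of "\<lambda>i. x0 i + t * y i"] expand[of t y] wx0 by simp
  qed
  have eig_comp: "(\<Sum>j<n. A $$ (k,j) * x0 j) = M * x0 k" if k: "k < n" for k
  proof -
    define y where "y = (\<lambda>i. if i = k then 1 else 0::real)"
    have 1: "(\<Sum>i<n. x0 i * y i) = x0 k" unfolding y_def using k by (simp add: if_distrib cong: if_cong)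
    have 2: "(\<Sum>i<n. \<Sum>j<n. A $$ (i,j) * x0 i * y j) = (\<Sum>i<n. A $$ (i,k) * x0 i)"
      unfolding y_def using k by (simp add: if_distrib cong: if_cong)
    have "(\<Sum>i<n. A $$ (i,k) * x0 i) = M * x0 k" using B0[of y] unfolding Bf_def 1 2 by simp
    moreover have "(\<Sum>j<n. A $$ (k,j) * x0 j) = (\<Sum>i<n. A $$ (i,k) * x0 i)"
      using k by (intro sum.cong refl) (simp add: sym)
    ultimately show ?thesis by simp
  qed
  define v where "v = Matrix.vec n x0"
  have vc: "v \<in> carrier_vec n" unfolding v_def by simp
  have "\<exists>i<n. x0 i \<noteq> 0"
  proof (rule ccontr)
    assume "\<not> (\<exists>i<n. x0 i \<noteq> 0)"
    hence "sq x0 = 0" unfolding sq_def by simp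
    thus False using sqx0 by simp
  qed
  then obtain i where i: "i < n" "x0 i \<noteq> 0" by blast
  hence "v $ i \<noteq> (0\<^sub>v n) $ i" unfolding v_def by simp
  hence vn0: "v \<noteq> 0\<^sub>v n" by metis
  have Av: "A *\<^sub>v v = M \<cdot>\<^sub>v v"
  proof (rule eq_vecI)
    fix k assume "k < dim_vec (M \<cdot>\<^sub>v v)"
    hence k: "k < n" unfolding v_def by simp
    have "(A *\<^sub>v v) $ k = (\<Sum>j<n. A $$ (k,j) * x0 j)"
      using A k unfolding v_def by (simp add: scalar_prod_def lessThan_atLeast0)
    thus "(A *\<^sub>v v) $ k = (M \<cdot>\<^sub>v v) $ k" using eig_comp[OF k] k unfolding v_def by simp
  qed (use A v_def in simp)
  have "eigenvalue A M" unfolding eigenvalue_def eigenvector_def using A vc vn0 Av by auto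
  moreover have "(\<Sum>i<n. \<Sum>j<n. A $$ (i,j)) \<le> M * real n"
    using psd[of "\<lambda>_. 1"] unfolding q_def sq_def by simp
  ultimately show ?thesis by blast
qed



definition tr :: "'a::comm_ring_1 mat \<Rightarrow> 'a" where "tr M = (\<Sum>i<dim_row M. M $$ (i,i))"

lemma tr_comm:
  fixes X Y :: "'a::comm_ring_1 mat"
  assumes X: "X \<in> carrier_mat n n" and Y: "Y \<in> carrier_mat n n"
  shows "tr (X * Y) = tr (Y * X)"
proof -
  have "tr (X * Y) = (\<Sum>i<n. \<Sum>k<n. X $$ (i,k) * Y $$ (k,i))"
    unfolding tr_def using X Y by (simp add: scalar_prod_def lessThan_atLeast0)
  also have "\<dots> = (\<Sum>k<n. \<Sum>i<n. X $$ (i,k) * Y $$ (k,i))" by (rule sum.swap)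
  also have "\<dots> = tr (Y * X)"
    unfolding tr_def using X Y by (simp add: scalar_prod_def lessThan_atLeast0 mult.commute)
  finally show ?thesis .
qed

lemma schur_traces:
  fixes A :: "real mat"
  assumes A: "A \<in> carrier_mat n n" and cp: "char_poly A = (\<Prod>l\<leftarrow>ls. [:-l, 1:])"
  shows "(\<Sum>i<n. ls ! i) = tr A \<and> (\<Sum>i<n. (ls ! i)^2) = tr (A * A)"
proof -
  obtain B P Q where sd: "schur_decomposition A ls = (B,P,Q)" by (cases "schur_decomposition A ls") auto
  from schur_decomposition[OF A cp sd]
  have sim: "similar_mat_wit A B P Q" and ut: "upper_triangular B" and dg: "diag_mat B = ls" by auto
  from sim A have B: "B \<in> carrier_mat n n" and P: "P \<in> carrier_mat n n" and Q: "Q \<in> carrier_mat n n"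
    and QP: "Q * P = 1\<^sub>m n" and AB: "A = P * B * Q"
    unfolding similar_mat_wit_def Let_def by auto
  have trsim: "tr (P * M * Q) = tr M" if M: "M \<in> carrier_mat n n" for M
  proof -
    have "tr (P * M * Q) = tr (P * (M * Q))" using P M Q by (simp add: assoc_mult_mat)
    also have "\<dots> = tr ((M * Q) * P)" using P M Q by (intro tr_comm) auto
    also have "\<dots> = tr (M * (Q * P))" using P M Q by (simp add: assoc_mult_mat)
    also have "\<dots> = tr M" using QP M by simp
    finally show ?thesis .
  qed
  have AA: "A * A = P * (B * B) * Q"
  proof -
    have PB: "P * B \<in> carrier_mat n n" "B * Q \<in> carrier_mat n n" "B * B \<in> carrier_mat n n" using P B Q by auto
    have "A * A = (P * B) * (Q * (P * B * Q))" unfolding AB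
      by (rule assoc_mult_mat) (use P B Q in auto)
    also have "Q * (P * B * Q) = Q * (P * (B * Q))" using assoc_mult_mat[OF P B Q] by simp
    also have "\<dots> = (Q * P) * (B * Q)" by (rule assoc_mult_mat[symmetric]) (use P B Q in auto)
    also have "\<dots> = B * Q" using QP left_mult_one_mat[OF PB(2)] by simp
    also have "(P * B) * (B * Q) = P * (B * (B * Q))" by (rule assoc_mult_mat) (use P B Q in auto)
    also have "B * (B * Q) = (B * B) * Q" by (rule assoc_mult_mat[symmetric]) (use P B Q in auto)
    also have "P * ((B * B) * Q) = P * (B * B) * Q" by (rule assoc_mult_mat[symmetric]) (use P B Q in auto)
    finally show ?thesis .
  qed
  have lsi: "ls ! i = B $$ (i,i)" if "i < n" for i
    using that B unfolding dg[symmetric] diag_mat_def by simp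
  have "tr A = tr B" unfolding AB using trsim[OF B] .
  also have "tr B = (\<Sum>i<n. ls ! i)" unfolding tr_def using B lsi by simp
  finally have 1: "(\<Sum>i<n. ls ! i) = tr A" ..
  have BBi: "(B * B) $$ (i,i) = (B $$ (i,i))^2" if i: "i < n" for i
  proof -
    have "(B * B) $$ (i,i) = (\<Sum>k<n. B $$ (i,k) * B $$ (k,i))"
      using B i by (simp add: scalar_prod_def lessThan_atLeast0)
    also have "\<dots> = (\<Sum>k<n. if k = i then (B $$ (i,i))^2 else 0)"
    proof (intro sum.cong refl)
      fix k assume k: "k \<in> {..<n}"
      show "B $$ (i,k) * B $$ (k,i) = (if k = i then (B $$ (i,i))^2 else 0)"
      proof (cases "k < i")
        case True thus ?thesis using ut B i unfolding upper_triangular_def by auto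
      next
        case False
        show ?thesis
        proof (cases "k = i")
          case True thus ?thesis by (simp add: power2_eq_square)
        next
          case False
          hence "i < k" using \<open>\<not> k < i\<close> by simp
          thus ?thesis using ut B k unfolding upper_triangular_def by auto
        qed
      qed
    qed
    also have "\<dots> = (B $$ (i,i))^2" using i by simp
    finally show ?thesis .
  qed
  have "tr (A * A) = tr (B * B)" unfolding AA using trsim B by simp
  also have "\<dots> = (\<Sum>i<n. (ls ! i)^2)" unfolding tr_def using B BBi lsi by simp
  finally show ?thesis using 1 by simp
qed

lemma count_pairs:
  assumes sg: "simple_graph n E"
  shows "(\<Sum>i<n. \<Sum>j<n. if E i j then 1 else 0 :: real) = 2 * real (num_edges n E)"
proof -
  define Pairs where "Pairs = {(i,j). i < n \<and> j < n \<and> E i j}"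
  define Up where "Up = {(i,j). i < j \<and> j < n \<and> E i j}"
  define Lo where "Lo = {(i,j). j < i \<and> i < n \<and> E i j}"
  have symE: "E i j \<Longrightarrow> i < n \<Longrightarrow> j < n \<Longrightarrow> E j i" for i j using sg unfolding simple_graph_def by blast
  have irr: "i < n \<Longrightarrow> \<not> E i i" for i using sg unfolding simple_graph_def by blast
  have finP: "finite Pairs" unfolding Pairs_def
    by (rule finite_subset[of _ "{..<n} \<times> {..<n}"]) auto
  have "(\<Sum>i<n. \<Sum>j<n. if E i j then 1 else 0 :: real) = (\<Sum>p\<in>{..<n} \<times> {..<n}. if E (fst p) (snd p) then 1 else 0)"
    by (simp add: sum.cartesian_product case_prod_beta)
  also have "\<dots> = (\<Sum>p\<in>{p \<in> {..<n} \<times> {..<n}. E (fst p) (snd p)}. 1)"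
    by (subst sum.inter_filter) auto
  also have "{p \<in> {..<n} \<times> {..<n}. E (fst p) (snd p)} = Pairs" unfolding Pairs_def by auto
  finally have s: "(\<Sum>i<n. \<Sum>j<n. if E i j then 1 else 0 :: real) = real (card Pairs)" by simp
  have PUL: "Pairs = Up \<union> Lo" unfolding Pairs_def Up_def Lo_def using irr
    by auto (metis linorder_neqE_nat)
  have disj: "Up \<inter> Lo = {}" unfolding Up_def Lo_def by auto
  have finU: "finite Up" "finite Lo" using finP PUL by auto
  have "bij_betw prod.swap Up Lo"
    unfolding bij_betw_def Up_def Lo_def using symE by (auto simp: image_iff)
  hence cLo: "card Lo = card Up" by (simp add: bij_betw_same_card)
  have Es: "{{i, j} | i j. i < n \<and> j < n \<and> E i j} = (\<lambda>(i,j). {i,j}) ` Up"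
  proof
    show "{{i, j} | i j. i < n \<and> j < n \<and> E i j} \<subseteq> (\<lambda>(i,j). {i,j}) ` Up"
    proof
      fix e assume "e \<in> {{i, j} | i j. i < n \<and> j < n \<and> E i j}"
      then obtain i j where e: "e = {i,j}" "i < n" "j < n" "E i j" by blast
      show "e \<in> (\<lambda>(i,j). {i,j}) ` Up"
      proof (cases "i < j")
        case True thus ?thesis using e unfolding Up_def by (auto simp: image_iff)
      next
        case False
        hence "j < i" using e irr by (metis linorder_neqE_nat)
        moreover have "E j i" using symE e by blast
        ultimately have "(j,i) \<in> Up" using e unfolding Up_def by auto
        moreover have "e = {j,i}" using e by auto
        ultimately show ?thesis by (auto simp: image_iff)
      qed
    qed
    show "(\<lambda>(i,j). {i,j}) ` Up \<subseteq> {{i, j} | i j. i < n \<and> j < n \<and> E i j}"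
    proof
      fix e assume "e \<in> (\<lambda>(i,j). {i,j}) ` Up"
      then obtain i j where "e = {i,j}" "i < j" "j < n" "E i j" unfolding Up_def by auto
      thus "e \<in> {{i, j} | i j. i < n \<and> j < n \<and> E i j}" by auto
    qed
  qed
  have inj: "inj_on (\<lambda>(i,j). {i,j}) Up"
  proof (rule inj_onI)
    fix p p' assume "p \<in> Up" "p' \<in> Up" and eq: "(\<lambda>(i,j). {i,j::nat}) p = (\<lambda>(i,j). {i,j}) p'"
    then obtain i j i' j' where p: "p = (i,j)" "p' = (i',j')" "i < j" "i' < j'" unfolding Up_def by auto
    from eq p have "{i,j} = {i',j'}" by simp
    thus "p = p'" using p by (auto simp: doubleton_eq_iff)
  qed
  have "num_edges n E = card Up" unfolding num_edges_def Es using card_image[OF inj] .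
  moreover have "card Pairs = card Up + card Lo" unfolding PUL using card_Un_disjoint[OF finU disj] .
  ultimately show ?thesis using s cLo by simp
qed


theorem mainTheorem2:
  fixes n :: nat and E :: "nat \<Rightarrow> nat \<Rightarrow> bool"
  assumes "simple_graph n E"
    and "odd n"
    and "num_edges n E \<ge> n - 1" and "n - 1 \<ge> 3"
  shows "let m = real (num_edges n E); N = real n in
    huckel_energy n E \<le>
      (if m \<le> N\<^sup>2 * (N - 3)\<^sup>2 / (2 * (N\<^sup>2 - 4 * N + 11))
       then 2 * m / (N - 1)
            + sqrt (2 * m * N * (N\<^sup>2 - 3 * N + 1) * (N\<^sup>2 - N - 2 * m)) / (N * (N - 1))
       else (1 / N) * sqrt (2 * m * (2 * N - 1) * (N\<^sup>2 - 2 * m)))"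
proof -
  define A where "A = adj_mat n E"
  define m where "m = real (num_edges n E)"
  define N where "N = real n"
  define r where "r = n div 2"
  have n: "n = 2*r+1" using assms(2) unfolding r_def by (simp add: odd_two_times_div_two_succ)
  have r2: "r \<ge> 2" using assms(4) n by simp
  have Ac: "A \<in> carrier_mat n n" unfolding A_def adj_mat_def by simp
  have Aij: "A $$ (i,j) = (if E i j then 1 else 0)" if "i < n" "j < n" for i j
    using that unfolding A_def adj_mat_def by simp
  have symE: "E i j \<longleftrightarrow> E j i" if "i < n" "j < n" for i j
    using assms(1) that unfolding simple_graph_def by blast
  have irr: "\<not> E i i" if "i < n" for i using assms(1) that unfolding simple_graph_def by blast
  have symA: "A $$ (i,j) = A $$ (j,i)" if "i < n" "j < n" for i j
    using Aij[OF that] Aij[OF that(2,1)] symE[OF that] by simp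
  define ls where "ls = eigenvalues_desc A"
  have props: "length ls = n" "sorted_wrt (\<ge>) ls" "char_poly A = (\<Prod>l\<leftarrow>ls. [:-l, 1:])"
    using eigenvalues_desc_props[OF Ac symA] unfolding ls_def by auto
  have tr: "(\<Sum>i<n. ls ! i) = tr A" "(\<Sum>i<n. (ls ! i)^2) = tr (A * A)"
    using schur_traces[OF Ac props(3)] by auto
  have trA: "tr A = 0" unfolding tr_def using Ac Aij irr by simp
  have cnt: "(\<Sum>i<n. \<Sum>j<n. A $$ (i,j)) = 2 * m"
    unfolding m_def using count_pairs[OF assms(1)] Aij by simp
  have trAA: "tr (A * A) = 2 * m"
  proof -
    have "tr (A * A) = (\<Sum>i<n. \<Sum>k<n. A $$ (i,k) * A $$ (k,i))"
      unfolding tr_def using Ac by (simp add: scalar_prod_def lessThan_atLeast0)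
    also have "\<dots> = (\<Sum>i<n. \<Sum>k<n. A $$ (i,k))"
      by (intro sum.cong refl) (simp add: Aij symE)
    finally show ?thesis using cnt by simp
  qed
  have n0: "n > 0" using n by simp
  obtain M where M: "eigenvalue A M" "(\<Sum>i<n. \<Sum>j<n. A $$ (i,j)) \<le> M * real n"
    using rayleigh_eigenvalue[OF Ac symA n0] by blast
  have "poly (char_poly A) M = 0" using M(1) eigenvalue_root_char_poly[OF Ac] by simp
  hence Mls: "M \<in> set ls" unfolding props(3) by (auto simp: poly_prod_list_zero_iff)
  have "M \<le> ls ! 0"
  proof (cases ls)
    case Nil thus ?thesis using Mls by simp
  next
    case (Cons x xs)
    thus ?thesis using Mls props(2) by auto
  qed
  hence "M * real n \<le> ls ! 0 * real n" by (rule mult_right_mono) simp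
  hence "2 * m \<le> ls ! 0 * real n" using M(2) cnt by simp
  hence l0: "ls ! 0 \<ge> 2 * m / real n" using n0 by (simp add: divide_le_eq)
  have mge: "m \<ge> real n - 1" using assms(3) n unfolding m_def by simp
  have hb: "2*(\<Sum>i<r. ls ! i) + ls ! r \<le> 2*m/(real n - 1)
     + sqrt (2*m*real n*((real n)^2 - 3*real n + 1)*((real n)^2 - real n - 2*m)) / (real n * (real n - 1))
     \<and> 2*m \<le> real n * (real n - 1)"
    by (rule he_list_bound[OF n r2]) (use tr trA trAA l0 mge in auto)
  have HE: "huckel_energy n E = 2*(\<Sum>i<r. ls ! i) + ls ! r"
    unfolding huckel_energy_def Let_def using assms(2) unfolding r_def ls_def A_def by simp
  have N5: "N \<ge> 5" using n r2 unfolding N_def by simp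
  have mpos: "0 < 2*m" using mge n r2 by simp
  have c12: "2*m/(N-1) + sqrt (2*m*N*(N^2 - 3*N + 1)*(N^2 - N - 2*m)) / (N*(N-1))
        \<le> (1 / N) * sqrt (2*m * (2*N - 1) * (N^2 - 2*m))"
    using c1_le_c2[OF N5 mpos] hb unfolding N_def by simp
  show ?thesis unfolding Let_def m_def[symmetric] N_def[symmetric] HE
    using hb c12 unfolding N_def by auto
qed

end
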